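(* Let $Z=(Z_1,\dots,Z_n)^\top$ be generated by the structural equations $Z_i = f_i(Z_{pa(i)}) + \mathcal{E}_i$, $i\in[n]$, with respect to a directed acyclic graph $\mathcal{G}$ on $[n]$, where each $f_i$ is twice continuously differentiable and directionally non-linear, and $\mathcal{E}_1,\dots,\mathcal{E}_n$ are mutually independent with $\mathcal{E}_i\sim\mathcal{N}(0,\sigma_i^2)$. Let $J_Z(z)=\nabla_z^2\log p(z)$ be the Jacobian of the score of $Z$, let $\beta\in\mathbb{R}^{n\times n}$, and set $J_{\hat Z}:=\beta^\top J_Z(Z)\,\beta$. Then for each $i\in[n]$, $\operatorname{Var}\big([J_{\hat Z}]_{ii}\big)=0$ if and only if the $i$-th column of $\beta$ has zero entries in every row corresponding to a non-leaf node of $\mathcal{G}$ (i.e. $\beta_{ji}=0$ for all non-leaf $j$).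
   Context: $p$ denotes the density of $Z$ and $pa(i)$ the parents of node $i$ in $\mathcal{G}$. A function $f_i:\mathbb{R}^{|pa(i)|}\to\mathbb{R}$ is directionally non-linear if there is no $\beta'\in\mathbb{R}^{|pa(i)|}$ with $\|\beta'\|_2=1$ such that $\partial^2_{\beta',\beta'} f_i(z)=0$ for all $z$. A leaf node is a node with no descendants in $\mathcal{G}$. In the paper's setting $X=HZ$ with $H\in\mathbb{R}^{d\times n}$ of full column rank, $\hat Z=\hat H^\dagger X$ for an estimate $\hat H\in\mathbb{R}^{d\times n}$, $\beta=H^\dagger\hat H$, and $J_{\hat Z}=\hat H^\top J_X\hat H=\beta^\top J_Z\beta$; the variance is taken over the randomness of $Z$. *)

theory Defs
  imports "HOL-Probability.Probability"
begin

definition dir_deriv :: "(real^'n \<Rightarrow> real) \<Rightarrow> real^'n \<Rightarrow> real^'n \<Rightarrow> real" where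
  "dir_deriv f v z = frechet_derivative f (at z) v"

definition dir_deriv2 :: "(real^'n \<Rightarrow> real) \<Rightarrow> real^'n \<Rightarrow> real^'n \<Rightarrow> real^'n \<Rightarrow> real" where
  "dir_deriv2 f v w z = frechet_derivative (\<lambda>y. dir_deriv f v y) (at z) w"

definition C2 :: "(real^'n \<Rightarrow> real) \<Rightarrow> bool" where
  "C2 f \<longleftrightarrow> (\<forall>z. f differentiable (at z))
     \<and> (\<forall>v z. (\<lambda>y. dir_deriv f v y) differentiable (at z))
     \<and> (\<forall>v w. continuous_on UNIV (dir_deriv2 f v w))"

definition hessian :: "(real^'n \<Rightarrow> real) \<Rightarrow> real^'n \<Rightarrow> real^'n^'n" where
  "hessian f z = (\<chi> j k. dir_deriv2 f (axis k 1) (axis j 1) z)"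

definition edges :: "('n \<Rightarrow> 'n set) \<Rightarrow> ('n \<times> 'n) set" where
  "edges pa = {(j, i). j \<in> pa i}"

definition is_dag :: "('n \<Rightarrow> 'n set) \<Rightarrow> bool" where
  "is_dag pa \<longleftrightarrow> acyclic (edges pa)"

definition leaf :: "('n \<Rightarrow> 'n set) \<Rightarrow> 'n \<Rightarrow> bool" where
  "leaf pa i \<longleftrightarrow> {k. (i, k) \<in> (edges pa)\<^sup>+} = {}"

definition depends_only_on :: "(real^'n \<Rightarrow> real) \<Rightarrow> 'n set \<Rightarrow> bool" where
  "depends_only_on f S \<longleftrightarrow> (\<forall>z z'. (\<forall>j\<in>S. z $ j = z' $ j) \<longrightarrow> f z = f z')"

definition dir_nonlinear :: "(real^'n \<Rightarrow> real) \<Rightarrow> 'n set \<Rightarrow> bool" where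
  "dir_nonlinear f S \<longleftrightarrow>
     \<not> (\<exists>b::real^'n. norm b = 1 \<and> (\<forall>j. j \<notin> S \<longrightarrow> b $ j = 0) \<and> (\<forall>z. dir_deriv2 f b b z = 0))"

definition zero_variance :: "'a measure \<Rightarrow> ('a \<Rightarrow> real) \<Rightarrow> bool" where
  "zero_variance M X \<longleftrightarrow> integrable M (\<lambda>x. (X x)\<^sup>2) \<and> prob_space.variance M X = 0"

end

theory Submission
  imports Defs
begin



lemma fd_translate_inv:
  fixes g :: "real^'n \<Rightarrow> real"
  assumes "\<And>y. g (y + u) = g y" "g differentiable (at z)"
  shows "frechet_derivative g (at (z + u)) = frechet_derivative g (at z)"
proof -
  have d: "(g has_derivative frechet_derivative g (at z)) (at z)"
    using assms(2) by (simp add: frechet_derivative_works)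
  have s: "((\<lambda>y. y - u) has_derivative (\<lambda>h. h)) (at (z + u))"
    by (auto intro!: derivative_eq_intros)
  have "((g \<circ> (\<lambda>y. y - u)) has_derivative (frechet_derivative g (at z) \<circ> (\<lambda>h. h))) (at (z + u))"
    by (rule diff_chain_at[OF s]) (simp add: d)
  moreover have "g \<circ> (\<lambda>y. y - u) = g"
    using assms(1) by (metis (no_types, lifting) comp_apply diff_add_cancel ext)
  ultimately have "(g has_derivative frechet_derivative g (at z)) (at (z + u))"
    by (simp add: comp_def)
  then show ?thesis by (metis frechet_derivative_at)
qed

lemma fd_dir_zero:
  fixes g :: "real^'n \<Rightarrow> real"
  assumes "\<And>y t. g (y + t *\<^sub>R u) = g y" "g differentiable (at z)"
  shows "frechet_derivative g (at z) u = 0"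
proof -
  let ?D = "frechet_derivative g (at z)"
  have d: "(g has_derivative ?D) (at z)"
    using assms(2) by (simp add: frechet_derivative_works)
  have s: "((\<lambda>t::real. z + t *\<^sub>R u) has_derivative (\<lambda>t. t *\<^sub>R u)) (at 0)"
    by (auto intro!: derivative_eq_intros)
  have "((g \<circ> (\<lambda>t::real. z + t *\<^sub>R u)) has_derivative (?D \<circ> (\<lambda>t. t *\<^sub>R u))) (at 0)"
    by (rule diff_chain_at[OF s]) (simp add: d)
  moreover have "g \<circ> (\<lambda>t::real. z + t *\<^sub>R u) = (\<lambda>t. g z)"
    using assms(1) by (auto simp: comp_def)
  ultimately have "((\<lambda>t::real. g z) has_derivative (?D \<circ> (\<lambda>t. t *\<^sub>R u))) (at 0)" by simp
  moreover have "((\<lambda>t::real. g z) has_derivative (\<lambda>t. 0)) (at 0)" by simp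
  ultimately have "(?D \<circ> (\<lambda>t. t *\<^sub>R u)) = (\<lambda>t. 0)" by (rule has_derivative_unique)
  then show ?thesis by (metis comp_apply scaleR_one)
qed



lemma basis_exp_real: "(\<Sum>j\<in>UNIV. (x$j) *\<^sub>R axis j (1::real)) = (x::real^'n)"
  using basis_expansion[of x] by (simp add: scalar_mult_eq_scaleR)

lemma has_derivative_nth[derivative_intros]:
  "((\<lambda>x::real^'n. x $ k) has_derivative (\<lambda>v. v $ k)) F"
  by (rule bounded_linear_imp_has_derivative) (rule bounded_linear_vec_nth)

lemma fd_works: "f differentiable (at z) \<Longrightarrow> (f has_derivative frechet_derivative f (at z)) (at z)"
  by (simp add: frechet_derivative_works)

lemma fd_linear:
  fixes f :: "real^'n \<Rightarrow> real"
  assumes "f differentiable (at z)"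
  shows "linear (frechet_derivative f (at z))"
  using fd_works[OF assms] has_derivative_linear by blast

lemma dd_sum:
  fixes f :: "real^'n \<Rightarrow> real"
  assumes "f differentiable (at z)"
  shows "dir_deriv f (\<Sum>j\<in>J. c j *\<^sub>R v j) z = (\<Sum>j\<in>J. c j * dir_deriv f (v j) z)"
  using fd_linear[OF assms] unfolding dir_deriv_def
  by (simp add: linear_sum linear_cmul o_def)

lemma dd_add:
  fixes f :: "real^'n \<Rightarrow> real"
  assumes "f differentiable (at z)"
  shows "dir_deriv f (v + w) z = dir_deriv f v z + dir_deriv f w z"
    and "dir_deriv f (c *\<^sub>R v) z = c * dir_deriv f v z"
    and "dir_deriv f (v - w) z = dir_deriv f v z - dir_deriv f w z"
  using fd_linear[OF assms] unfolding dir_deriv_def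
  by (simp_all add: linear_add linear_cmul linear_diff)

lemma dd2_w:
  fixes f :: "real^'n \<Rightarrow> real"
  assumes "(\<lambda>y. dir_deriv f v y) differentiable (at z)"
  shows "dir_deriv2 f v (\<Sum>j\<in>J. c j *\<^sub>R w j) z = (\<Sum>j\<in>J. c j * dir_deriv2 f v (w j) z)"
    and "dir_deriv2 f v (w1 + w2) z = dir_deriv2 f v w1 z + dir_deriv2 f v w2 z"
    and "dir_deriv2 f v (w1 - w2) z = dir_deriv2 f v w1 z - dir_deriv2 f v w2 z"
    and "dir_deriv2 f v (a *\<^sub>R w1) z = a * dir_deriv2 f v w1 z"
  using fd_linear[OF assms] unfolding dir_deriv2_def
  by (simp_all add: linear_sum linear_cmul linear_add linear_diff o_def)

lemma dd2_v_sum: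
  fixes f :: "real^'n \<Rightarrow> real"
  assumes "\<And>y. f differentiable (at y)"
    and "\<And>j. j \<in> J \<Longrightarrow> (\<lambda>y. dir_deriv f (v j) y) differentiable (at z)"
  shows "dir_deriv2 f (\<Sum>j\<in>J. c j *\<^sub>R v j) w z = (\<Sum>j\<in>J. c j * dir_deriv2 f (v j) w z)"
proof -
  have e: "(\<lambda>y. dir_deriv f (\<Sum>j\<in>J. c j *\<^sub>R v j) y) = (\<lambda>y. \<Sum>j\<in>J. c j * dir_deriv f (v j) y)"
    by (rule ext, rule dd_sum[OF assms(1)])
  have "((\<lambda>y. \<Sum>j\<in>J. c j * dir_deriv f (v j) y) has_derivative
          (\<lambda>w. \<Sum>j\<in>J. c j * frechet_derivative (\<lambda>y. dir_deriv f (v j) y) (at z) w)) (at z)"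
    by (intro has_derivative_sum has_derivative_mult_right fd_works assms(2))
  then show ?thesis unfolding dir_deriv2_def e
    by (metis (no_types, lifting) frechet_derivative_at)
qed

lemma dd2_v:
  fixes f :: "real^'n \<Rightarrow> real"
  assumes "\<And>y. f differentiable (at y)"
    and "(\<lambda>y. dir_deriv f v1 y) differentiable (at z)"
    and "(\<lambda>y. dir_deriv f v2 y) differentiable (at z)"
  shows "dir_deriv2 f (v1 + v2) w z = dir_deriv2 f v1 w z + dir_deriv2 f v2 w z"
    and "dir_deriv2 f (c *\<^sub>R v1) w z = c * dir_deriv2 f v1 w z"
proof -
  have e: "(\<lambda>y. dir_deriv f (v1 + v2) y) = (\<lambda>y. dir_deriv f v1 y + dir_deriv f v2 y)"
    using dd_add[OF assms(1)] by auto
  have "((\<lambda>y. dir_deriv f v1 y + dir_deriv f v2 y) has_derivative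
          (\<lambda>w. frechet_derivative (\<lambda>y. dir_deriv f v1 y) (at z) w + frechet_derivative (\<lambda>y. dir_deriv f v2 y) (at z) w)) (at z)"
    by (intro has_derivative_add fd_works assms(2,3))
  then show "dir_deriv2 f (v1 + v2) w z = dir_deriv2 f v1 w z + dir_deriv2 f v2 w z"
    unfolding dir_deriv2_def e
    by (metis (no_types, lifting) frechet_derivative_at)
  have e2: "(\<lambda>y. dir_deriv f (c *\<^sub>R v1) y) = (\<lambda>y. c * dir_deriv f v1 y)"
    using dd_add[OF assms(1)] by auto
  have "((\<lambda>y. c * dir_deriv f v1 y) has_derivative
          (\<lambda>w. c * frechet_derivative (\<lambda>y. dir_deriv f v1 y) (at z) w)) (at z)"
    by (intro has_derivative_mult_right fd_works assms(2))
  then show "dir_deriv2 f (c *\<^sub>R v1) w z = c * dir_deriv2 f v1 w z"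
    unfolding dir_deriv2_def e2
    by (metis (no_types, lifting) frechet_derivative_at)
qed

lemma quad_form:
  fixes f :: "real^'n \<Rightarrow> real"
  assumes "\<And>y. f differentiable (at y)"
    and "\<And>v. (\<lambda>y. dir_deriv f v y) differentiable (at z)"
  shows "(\<Sum>l\<in>UNIV. \<Sum>j\<in>UNIV. b$l * b$j * dir_deriv2 f (axis j 1) (axis l 1) z) = dir_deriv2 f b b z"
proof -
  have "dir_deriv2 f b b z = dir_deriv2 f (\<Sum>j\<in>UNIV. (b$j) *\<^sub>R axis j 1) (\<Sum>l\<in>UNIV. (b$l) *\<^sub>R axis l 1) z"
    by (simp add: basis_exp_real)
  also have "\<dots> = (\<Sum>j\<in>UNIV. b$j * dir_deriv2 f (axis j 1) (\<Sum>l\<in>UNIV. (b$l) *\<^sub>R axis l 1) z)"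
    by (rule dd2_v_sum[OF assms])
  also have "\<dots> = (\<Sum>j\<in>UNIV. b$j * (\<Sum>l\<in>UNIV. b$l * dir_deriv2 f (axis j 1) (axis l 1) z))"
    by (simp add: dd2_w(1)[OF assms(2)])
  also have "\<dots> = (\<Sum>l\<in>UNIV. \<Sum>j\<in>UNIV. b$l * b$j * dir_deriv2 f (axis j 1) (axis l 1) z)"
    by (subst sum.swap) (simp add: sum_distrib_left mult_ac)
  finally show ?thesis by simp
qed

lemma hess_entry:
  fixes \<beta> :: "real^'n^'n"
  shows "(transpose \<beta> ** hessian g z ** \<beta>) $ i $ i =
    (\<Sum>l\<in>UNIV. \<Sum>j\<in>UNIV. \<beta>$l$i * \<beta>$j$i * dir_deriv2 g (axis j 1) (axis l 1) z)"
  by (simp add: matrix_matrix_mult_def transpose_def hessian_def sum_distrib_left sum_distrib_right mult_ac)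
     (subst sum.swap, simp add: mult_ac)

context
  fixes f :: "'n::finite \<Rightarrow> real^'n \<Rightarrow> real" and \<sigma> :: "'n \<Rightarrow> real" and C :: "'n \<Rightarrow> real"
  assumes fd: "\<And>k y. f k differentiable (at y)"
    and fdd: "\<And>k v y. (\<lambda>y. dir_deriv (f k) v y) differentiable (at y)"
    and sig: "\<And>k. \<sigma> k \<noteq> 0"
begin

lemma sig2: "(\<sigma> k)\<^sup>2 \<noteq> 0" "2 * (\<sigma> k)\<^sup>2 \<noteq> 0" "\<sigma> k \<noteq> 0"
  using sig by auto

definition LL :: "real^'n \<Rightarrow> real" where
  "LL y = (\<Sum>k\<in>UNIV. C k - (y$k - f k y)\<^sup>2 / (2 * (\<sigma> k)\<^sup>2))"

lemma LL_has_deriv: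
  "(LL has_derivative (\<lambda>v. \<Sum>k\<in>UNIV. - ((y$k - f k y) * (v$k - dir_deriv (f k) v y)) / (\<sigma> k)\<^sup>2)) (at y)"
proof -
  have "((\<lambda>y. \<Sum>k\<in>UNIV. C k - (y$k - f k y)\<^sup>2 / (2 * (\<sigma> k)\<^sup>2)) has_derivative
        (\<lambda>v. \<Sum>k\<in>UNIV. - ((y$k - f k y) * (v$k - dir_deriv (f k) v y)) / (\<sigma> k)\<^sup>2)) (at y)"
    apply (rule has_derivative_eq_rhs)
     apply (rule derivative_eq_intros fd_works fd refl sig2)+
    apply (rule ext) apply (rule sum.cong, simp) using sig apply (simp add: dir_deriv_def dir_deriv2_def) apply (simp add: field_simps) done
  then show ?thesis unfolding LL_def[abs_def] .
qed

lemma LL_diff: "LL differentiable (at y)"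
  using LL_has_deriv by (rule differentiableI)

lemma LL_dd: "dir_deriv LL v y = (\<Sum>k\<in>UNIV. - ((y$k - f k y) * (v$k - dir_deriv (f k) v y)) / (\<sigma> k)\<^sup>2)"
  unfolding dir_deriv_def frechet_derivative_at[OF LL_has_deriv, symmetric] by simp

lemma LL_dd_has_deriv:
  "((\<lambda>y. dir_deriv LL v y) has_derivative
     (\<lambda>w. \<Sum>k\<in>UNIV. - ((w$k - dir_deriv (f k) w z) * (v$k - dir_deriv (f k) v z)
         - (z$k - f k z) * dir_deriv2 (f k) v w z) / (\<sigma> k)\<^sup>2)) (at z)"
  unfolding LL_dd
  apply (rule has_derivative_eq_rhs)
   apply (rule derivative_eq_intros fd_works fd fdd refl sig2)+
  apply (rule ext) apply (rule sum.cong, simp) using sig apply (simp add: dir_deriv_def dir_deriv2_def) done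

lemma LL_dd_diff: "(\<lambda>y. dir_deriv LL v y) differentiable (at z)"
  using LL_dd_has_deriv by (rule differentiableI)

lemma LL_dd2: "dir_deriv2 LL v w z = (\<Sum>k\<in>UNIV. - ((w$k - dir_deriv (f k) w z) * (v$k - dir_deriv (f k) v z)
         - (z$k - f k z) * dir_deriv2 (f k) v w z) / (\<sigma> k)\<^sup>2)"
  unfolding dir_deriv2_def frechet_derivative_at[OF LL_dd_has_deriv, symmetric] by simp

end





lemma dep_inv:
  assumes "depends_only_on g S" "\<And>j. j \<in> S \<Longrightarrow> u $ j = 0"
  shows "g (y + u) = g y"
  using assms unfolding depends_only_on_def by auto

context
  fixes f :: "'n::finite \<Rightarrow> real^'n \<Rightarrow> real" and pa :: "'n \<Rightarrow> 'n set" and \<sigma> :: "'n \<Rightarrow> real"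
    and b :: "real^'n"
  assumes dep: "\<And>k. depends_only_on (f k) (pa k)"
    and c2: "\<And>k. C2 (f k)"
    and nopa: "\<And>k. k \<notin> pa k"
    and sig: "\<And>k. \<sigma> k \<noteq> 0"
begin

lemma fd: "f k differentiable (at y)"
  using c2 unfolding C2_def by blast
lemma fdd: "(\<lambda>y. dir_deriv (f k) v y) differentiable (at y)"
  using c2 unfolding C2_def by blast

lemma inv_dd:
  assumes "\<And>j. j \<in> pa m \<Longrightarrow> u $ j = 0"
  shows "dir_deriv (f m) v (y + u) = dir_deriv (f m) v y"
  unfolding dir_deriv_def
  by (subst fd_translate_inv[where g="f m"]) (auto intro: dep_inv[OF dep] assms fd)

lemma inv_dd2:
  assumes "\<And>j. j \<in> pa m \<Longrightarrow> u $ j = 0"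
  shows "dir_deriv2 (f m) v w (y + u) = dir_deriv2 (f m) v w y"
  unfolding dir_deriv2_def
  by (subst fd_translate_inv[where g="\<lambda>y. dir_deriv (f m) v y"]) (auto intro: inv_dd assms fdd)

lemma zero_dd:
  assumes "\<And>j. j \<in> pa m \<Longrightarrow> u $ j = 0"
  shows "dir_deriv (f m) u y = 0"
proof -
  have "\<And>y t. f m (y + t *\<^sub>R u) = f m y" by (rule dep_inv[OF dep]) (simp add: assms)
  then show ?thesis unfolding dir_deriv_def by (intro fd_dir_zero fd)
qed

lemma zero_dd2a:
  assumes "\<And>j. j \<in> pa m \<Longrightarrow> u $ j = 0"
  shows "dir_deriv2 (f m) u w y = 0"
proof -
  have e: "(\<lambda>y. dir_deriv (f m) u y) = (\<lambda>y. 0)"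
    using zero_dd[OF assms] by auto
  have "((\<lambda>y::real^'n. 0::real) has_derivative (\<lambda>h. 0)) (at y)" by simp
  then have "frechet_derivative (\<lambda>y::real^'n. 0::real) (at y) = (\<lambda>h. 0)"
    using frechet_derivative_at by metis
  then show ?thesis unfolding dir_deriv2_def e by simp
qed

lemma zero_dd2b:
  assumes "\<And>j. j \<in> pa m \<Longrightarrow> u $ j = 0"
  shows "dir_deriv2 (f m) v u y = 0"
proof -
  have "\<And>y t. dir_deriv (f m) v (y + t *\<^sub>R u) = dir_deriv (f m) v y" by (rule inv_dd) (simp add: assms)
  then show ?thesis unfolding dir_deriv2_def by (intro fd_dir_zero fdd)
qed

definition tau :: "'n \<Rightarrow> real^'n \<Rightarrow> real" where
  "tau m z = ((b$m - dir_deriv (f m) b z)\<^sup>2 - (z$m - f m z) * dir_deriv2 (f m) b b z) / (\<sigma> m)\<^sup>2"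

lemma h_formula:
  "dir_deriv2 (LL f \<sigma> C) b b z = - (\<Sum>m\<in>UNIV. tau m z)"
  unfolding LL_dd2[OF fd fdd sig] tau_def
  by (simp add: sum_negf[symmetric] power2_eq_square minus_divide_left)

lemma tau_const:
  assumes "\<And>j. j \<in> pa m \<Longrightarrow> b $ j = 0"
  shows "tau m z = (b$m)\<^sup>2 / (\<sigma> m)\<^sup>2"
  unfolding tau_def using zero_dd[OF assms] zero_dd2a[OF assms] by simp

lemma tau_inv:
  assumes "m \<noteq> k" "k \<notin> pa m"
  shows "tau m (z + t *\<^sub>R axis k 1) = tau m z"
proof -
  have u: "\<And>j. j \<in> pa m \<Longrightarrow> (t *\<^sub>R axis k 1 :: real^'n) $ j = 0"
    using assms by (auto simp: axis_def)
  show ?thesis unfolding tau_def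
    using inv_dd[OF u] inv_dd2[OF u] dep_inv[OF dep u] assms(1) by (simp add: axis_def)
qed

lemma tau_k:
  "tau k (z + t *\<^sub>R axis k 1) = tau k z - t * dir_deriv2 (f k) b b z / (\<sigma> k)\<^sup>2"
proof -
  have u: "\<And>j. j \<in> pa k \<Longrightarrow> (t *\<^sub>R axis k 1 :: real^'n) $ j = 0"
    using nopa by (auto simp: axis_def)
  show ?thesis unfolding tau_def
    using inv_dd[OF u] inv_dd2[OF u] dep_inv[OF dep u] by (simp add: axis_def diff_divide_distrib add_divide_distrib algebra_simps)
qed

lemma h_shift:
  assumes hk: "\<And>m j. k \<in> pa m \<Longrightarrow> j \<in> pa m \<Longrightarrow> b $ j = 0"
  shows "dir_deriv2 (LL f \<sigma> C) b b (z + t *\<^sub>R axis k 1) =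
         dir_deriv2 (LL f \<sigma> C) b b z + t * dir_deriv2 (f k) b b z / (\<sigma> k)\<^sup>2"
proof -
  have m: "tau m (z + t *\<^sub>R axis k 1) = tau m z" if "m \<noteq> k" for m
  proof (cases "k \<in> pa m")
    case True
    then have "\<And>j. j \<in> pa m \<Longrightarrow> b $ j = 0" using hk by blast
    then show ?thesis using tau_const[of m] by simp
  next
    case False
    then show ?thesis using tau_inv that by blast
  qed
  have "(\<Sum>m\<in>UNIV. tau m (z + t *\<^sub>R axis k 1)) =
        tau k (z + t *\<^sub>R axis k 1) + (\<Sum>m\<in>UNIV-{k}. tau m (z + t *\<^sub>R axis k 1))"
    by (simp add: sum.remove)
  also have "\<dots> = tau k z - t * dir_deriv2 (f k) b b z / (\<sigma> k)\<^sup>2 + (\<Sum>m\<in>UNIV-{k}. tau m z)"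
    using m tau_k by simp
  also have "(\<Sum>m\<in>UNIV-{k}. tau m z) = (\<Sum>m\<in>UNIV. tau m z) - tau k z"
    by (simp add: sum_diff1)
  finally show ?thesis unfolding h_formula by simp
qed

lemma core_if:
  assumes "\<And>m j. j \<in> pa m \<Longrightarrow> b $ j = 0"
  shows "dir_deriv2 (LL f \<sigma> C) b b z = - (\<Sum>m\<in>UNIV. (b$m)\<^sup>2 / (\<sigma> m)\<^sup>2)"
  unfolding h_formula using tau_const assms by simp

lemma core_onlyif:
  assumes const: "\<And>z. dir_deriv2 (LL f \<sigma> C) b b z = c"
    and hk: "\<And>m j. k \<in> pa m \<Longrightarrow> j \<in> pa m \<Longrightarrow> b $ j = 0"
    and nz: "j0 \<in> pa k" "b $ j0 \<noteq> 0"
    and dn: "dir_nonlinear (f k) (pa k)"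
  shows False
proof -
  have D0: "dir_deriv2 (f k) b b z = 0" for z
  proof -
    have "dir_deriv2 (LL f \<sigma> C) b b (z + 1 *\<^sub>R axis k 1) = dir_deriv2 (LL f \<sigma> C) b b z + 1 * dir_deriv2 (f k) b b z / (\<sigma> k)\<^sup>2"
      by (rule h_shift, rule hk, assumption+)
    then show ?thesis using const sig[of k] by simp
  qed
  define b' where "b' = (\<chi> j. if j \<in> pa k then b $ j else 0)"
  define u where "u = b - b'"
  have u0: "\<And>j. j \<in> pa k \<Longrightarrow> u $ j = 0" by (simp add: u_def b'_def)
  have bb: "b = b' + u" by (simp add: u_def)
  have D1: "dir_deriv2 (f k) b' b' z = 0" for z
  proof -
    have "dir_deriv2 (f k) b b z = dir_deriv2 (f k) b' b z + dir_deriv2 (f k) u b z"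
      unfolding bb[symmetric] using dd2_v(1)[OF fd fdd fdd] bb by metis
    also have "dir_deriv2 (f k) u b z = 0" using zero_dd2a[OF u0] .
    also have "dir_deriv2 (f k) b' b z = dir_deriv2 (f k) b' b' z + dir_deriv2 (f k) b' u z"
      using dd2_w(2)[OF fdd] bb by metis
    also have "dir_deriv2 (f k) b' u z = 0" using zero_dd2b[OF u0] .
    finally show ?thesis using D0[of z] by simp
  qed
  have "b' $ j0 \<noteq> 0" using nz by (simp add: b'_def)
  then have nb: "norm b' \<noteq> 0" by auto
  define b'' where "b'' = (1 / norm b') *\<^sub>R b'"
  have n1: "norm b'' = 1" using nb by (simp add: b''_def)
  have supp: "\<And>j. j \<notin> pa k \<Longrightarrow> b'' $ j = 0" by (simp add: b''_def b'_def)
  have "dir_deriv2 (f k) b'' b'' z = 0" for z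
    unfolding b''_def dd2_v(2)[OF fd fdd fdd] dd2_w(4)[OF fdd] D1 by simp
  then show False using dn n1 supp unfolding dir_nonlinear_def by blast
qed

end


lemma dag_nopa: "is_dag pa \<Longrightarrow> k \<notin> pa k"
  unfolding is_dag_def acyclic_def edges_def by auto

lemma leaf_parent: "j \<in> pa m \<Longrightarrow> \<not> leaf pa j"
  unfolding leaf_def edges_def by auto

lemma dag_select:
  fixes pa :: "'n::finite \<Rightarrow> 'n set" and b :: "real^'n"
  assumes "is_dag pa" "\<not> leaf pa j" "b $ j \<noteq> 0"
  shows "\<exists>k j0. j0 \<in> pa k \<and> b $ j0 \<noteq> 0 \<and> (\<forall>m j. k \<in> pa m \<longrightarrow> j \<in> pa m \<longrightarrow> b $ j = 0)"
proof -
  have "finite (edges pa)" by simp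
  then have wf: "wf ((edges pa)\<inverse>)"
    using assms(1) unfolding is_dag_def by (rule finite_acyclic_wf_converse)
  define Q where "Q = {k. \<exists>j0\<in>pa k. b $ j0 \<noteq> 0}"
  obtain k where "(j, k) \<in> (edges pa)\<^sup>+" using assms(2) unfolding leaf_def by auto
  then obtain k' where "(j, k') \<in> edges pa" by (meson tranclD)
  then have "k' \<in> Q" using assms(3) by (auto simp: Q_def edges_def)
  then obtain z where z: "z \<in> Q" "\<And>y. (y, z) \<in> (edges pa)\<inverse> \<Longrightarrow> y \<notin> Q"
    using wf unfolding wf_eq_minimal by metis
  show ?thesis
    using z by (auto simp: Q_def edges_def)
qed

lemma psf: "product_sigma_finite (\<lambda>_::'n. lborel::real measure)"
  unfolding product_sigma_finite_def by (simp add: sigma_finite_lborel)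

lemma Basis_vec_range: "(Basis :: (real^'n) set) = range (\<lambda>k. axis k 1)"
  by (auto simp: Basis_vec_def)

lemma prod_Basis_vec: "(\<Prod>b\<in>(Basis::(real^'n) set). g b) = (\<Prod>k\<in>UNIV. g (axis k 1))"
  unfolding Basis_vec_range by (subst prod.reindex) (auto simp: inj_on_def axis_eq_axis)

lemma vl_meas[measurable]:
  "(vec_lambda :: ('n::finite \<Rightarrow> real) \<Rightarrow> real^'n) \<in> borel_measurable (PiM UNIV (\<lambda>_. lborel))"
proof (subst borel_measurable_euclidean_space, intro ballI)
  fix i :: "real^'n" assume "i \<in> Basis"
  then obtain k where i: "i = axis k 1" by (auto simp: Basis_vec_range)
  have "(\<lambda>x::'n \<Rightarrow> real. vec_lambda x \<bullet> i) = (\<lambda>x. x k)"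
    by (simp add: i cart_eq_inner_axis[symmetric])
  moreover have "(\<lambda>x::'n \<Rightarrow> real. x k) \<in> borel_measurable (PiM UNIV (\<lambda>_. lborel))"
    using measurable_component_singleton[of k UNIV "\<lambda>_. lborel"] by simp
  ultimately show "(\<lambda>x. vec_lambda x \<bullet> i) \<in> borel_measurable (PiM UNIV (\<lambda>_. lborel))" by simp
qed

lemma lborel_vec: "(lborel :: (real^'n::finite) measure) = distr (PiM UNIV (\<lambda>_. lborel)) borel vec_lambda"
proof (rule lborel_eqI)
  interpret psf: product_sigma_finite "\<lambda>_::'n. lborel::real measure" by (rule psf)
  fix l u :: "real^'n"
  assume le: "\<And>b. b \<in> Basis \<Longrightarrow> l \<bullet> b \<le> u \<bullet> b"
  have le': "l $ k \<le> u $ k" for k using le[of "axis k 1"] by (simp add: Basis_vec_range cart_eq_inner_axis)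
  have "vec_lambda -` box l u \<inter> space (PiM UNIV (\<lambda>_. lborel)) = PiE UNIV (\<lambda>k. {l$k<..<u$k})"
    by (auto simp: space_PiM mem_box_cart PiE_def extensional_def Pi_iff)
  then have "emeasure (distr (PiM UNIV (\<lambda>_. lborel)) borel vec_lambda) (box l u) =
      emeasure (PiM UNIV (\<lambda>_. lborel)) (PiE UNIV (\<lambda>k. {l$k<..<u$k}))"
    by (subst emeasure_distr) auto
  also have "\<dots> = (\<Prod>k\<in>UNIV. emeasure lborel {l$k<..<u$k})"
    by (rule psf.emeasure_PiM) auto
  also have "\<dots> = (\<Prod>k\<in>UNIV. ennreal (u$k - l$k))"
    using le' by simp
  also have "\<dots> = ennreal (\<Prod>k\<in>UNIV. u$k - l$k)"
    using le' by (simp add: prod_ennreal)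
  also have "(\<Prod>k\<in>UNIV. u$k - l$k) = (\<Prod>b\<in>Basis. (u - l) \<bullet> b)"
    by (simp add: prod_Basis_vec cart_eq_inner_axis[symmetric])
  finally show "emeasure (distr (PiM UNIV (\<lambda>_. lborel)) borel vec_lambda) (box l u) = (\<Prod>b\<in>Basis. (u - l) \<bullet> b)" .
qed simp

lemma nn_lborel_vec:
  fixes g :: "real^'n::finite \<Rightarrow> ennreal"
  assumes [measurable]: "g \<in> borel_measurable borel"
  shows "(\<integral>\<^sup>+z. g z \<partial>lborel) = (\<integral>\<^sup>+x. g (vec_lambda x) \<partial>(PiM UNIV (\<lambda>_. lborel)))"
  by (subst lborel_vec) (simp add: nn_integral_distr)

lemma shear_nn:
  fixes g :: "real^'n::finite \<Rightarrow> ennreal" and c :: "real^'n \<Rightarrow> real"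
  assumes [measurable]: "g \<in> borel_measurable borel" "c \<in> borel_measurable borel"
    and c_inv: "\<And>z t. c (z + t *\<^sub>R axis k 1) = c z"
  shows "(\<integral>\<^sup>+z. g (z - c z *\<^sub>R axis k 1) \<partial>lborel) = (\<integral>\<^sup>+z. g z \<partial>lborel)"
proof -
  interpret psf: product_sigma_finite "\<lambda>_::'n. lborel::real measure" by (rule psf)
  let ?I = "UNIV - {k}"
  have ins: "insert k ?I = UNIV" by auto
  have upd: "vec_lambda (x(k := y)) = vec_lambda x + (y - x k) *\<^sub>R axis k 1" for x :: "'n \<Rightarrow> real" and y
    by (auto simp: vec_eq_iff axis_def)
  have key: "vec_lambda (x(k := y)) - c (vec_lambda (x(k := y))) *\<^sub>R axis k 1 =
      vec_lambda (x(k := y - c (vec_lambda x)))" for x :: "'n \<Rightarrow> real" and y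
    unfolding upd c_inv by (auto simp: vec_eq_iff axis_def)
  have m1: "(\<lambda>x. g (vec_lambda x - c (vec_lambda x) *\<^sub>R axis k 1)) \<in> borel_measurable (PiM (insert k ?I) (\<lambda>_. lborel))"
    unfolding ins by measurable
  have m2: "(\<lambda>x. g (vec_lambda x)) \<in> borel_measurable (PiM (insert k ?I) (\<lambda>_. lborel))"
    unfolding ins by measurable
  have inner: "(\<integral>\<^sup>+y. g (vec_lambda (x(k := y - c0))) \<partial>lborel) = (\<integral>\<^sup>+y. g (vec_lambda (x(k := y))) \<partial>lborel)"
    for x :: "'n \<Rightarrow> real" and c0
  proof -
    have [measurable]: "(\<lambda>y. g (vec_lambda (x(k := y)))) \<in> borel_measurable borel"
      unfolding upd by measurable
    show ?thesis
      using nn_integral_real_affine[of "\<lambda>y. g (vec_lambda (x(k := y)))" 1 "- c0"] by simp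
  qed
  have "(\<integral>\<^sup>+z. g (z - c z *\<^sub>R axis k 1) \<partial>lborel) =
      (\<integral>\<^sup>+x. g (vec_lambda x - c (vec_lambda x) *\<^sub>R axis k 1) \<partial>(PiM (insert k ?I) (\<lambda>_. lborel)))"
    unfolding ins by (rule nn_lborel_vec) measurable
  also have "\<dots> = (\<integral>\<^sup>+x. (\<integral>\<^sup>+y. g (vec_lambda (x(k := y)) - c (vec_lambda (x(k := y))) *\<^sub>R axis k 1) \<partial>lborel) \<partial>(PiM ?I (\<lambda>_. lborel)))"
    by (rule psf.product_nn_integral_insert[OF _ _ m1]) auto
  also have "\<dots> = (\<integral>\<^sup>+x. (\<integral>\<^sup>+y. g (vec_lambda (x(k := y))) \<partial>lborel) \<partial>(PiM ?I (\<lambda>_. lborel)))"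
    unfolding key inner ..
  also have "\<dots> = (\<integral>\<^sup>+x. g (vec_lambda x) \<partial>(PiM (insert k ?I) (\<lambda>_. lborel)))"
    by (rule psf.product_nn_integral_insert[OF _ _ m2, symmetric]) auto
  also have "\<dots> = (\<integral>\<^sup>+z. g z \<partial>lborel)"
    unfolding ins by (rule nn_lborel_vec[symmetric]) measurable
  finally show ?thesis .
qed

lemma shear_preserve:
  fixes c :: "real^'n::finite \<Rightarrow> real"
  assumes [measurable]: "c \<in> borel_measurable borel"
    and c_inv: "\<And>z t. c (z + t *\<^sub>R axis k 1) = c z"
  shows "distr lborel borel (\<lambda>z. z - c z *\<^sub>R axis k 1) = lborel"
proof (rule measure_eqI)
  fix X assume X: "X \<in> sets (distr lborel borel (\<lambda>z. z - c z *\<^sub>R axis k 1))"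
  then have [measurable]: "X \<in> sets borel" by simp
  have "emeasure (distr lborel borel (\<lambda>z. z - c z *\<^sub>R axis k 1)) X =
      (\<integral>\<^sup>+z. indicator X z \<partial>distr lborel borel (\<lambda>z. z - c z *\<^sub>R axis k 1))"
    by (subst nn_integral_indicator) auto
  also have "\<dots> = (\<integral>\<^sup>+z. indicator X (z - c z *\<^sub>R axis k 1) \<partial>lborel)"
    by (subst nn_integral_distr) auto
  also have "\<dots> = (\<integral>\<^sup>+z. indicator X z \<partial>lborel)"
    by (rule shear_nn) (auto simp: c_inv)
  also have "\<dots> = emeasure lborel X" by simp
  finally show "emeasure (distr lborel borel (\<lambda>z. z - c z *\<^sub>R axis k 1)) X = emeasure lborel X" .
qed simp



context
  fixes f :: "'n::finite \<Rightarrow> real^'n \<Rightarrow> real" and pa :: "'n \<Rightarrow> 'n set"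
  assumes dep: "\<And>k. depends_only_on (f k) (pa k)"
    and fcont: "\<And>k. continuous_on UNIV (f k)"
    and dag: "is_dag pa"
begin

lemma nopa': "k \<notin> pa k"
  using dag unfolding is_dag_def acyclic_def edges_def by auto

lemma f_meas[measurable]: "f k \<in> borel_measurable borel"
  by (rule borel_measurable_continuous_onI[OF fcont])

definition TA :: "'n set \<Rightarrow> real^'n \<Rightarrow> real^'n" where
  "TA A z = (\<chi> j. if j \<in> A then z$j - f j z else z$j)"

lemma TA_meas[measurable]: "TA A \<in> borel_measurable borel"
proof (subst borel_measurable_euclidean_space, intro ballI)
  fix i :: "real^'n" assume "i \<in> Basis"
  then obtain j where i: "i = axis j 1" by (auto simp: Basis_vec_range)
  have "(\<lambda>z. TA A z \<bullet> i) = (\<lambda>z. if j \<in> A then z$j - f j z else z$j)"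
    by (simp add: i cart_eq_inner_axis[symmetric] TA_def)
  moreover have "(\<lambda>z::real^'n. if j \<in> A then z$j - f j z else z$j) \<in> borel_measurable borel"
    by measurable
  ultimately show "(\<lambda>z. TA A z \<bullet> i) \<in> borel_measurable borel" by simp
qed

lemma TA_pres:
  assumes "\<And>j. j \<in> A \<Longrightarrow> pa j \<subseteq> A"
  shows "distr lborel borel (TA A) = lborel"
  using assms
proof (induct "card A" arbitrary: A rule: less_induct)
  case less
  show ?case
  proof (cases "A = {}")
    case True
    then have "TA A = (\<lambda>z. z)" by (auto simp: TA_def vec_eq_iff)
    then show ?thesis by (simp add: distr_id2)
  next
    case False
    have "finite (edges pa)" by simp
    then have wf: "wf ((edges pa)\<inverse>)"
      using dag unfolding is_dag_def by (rule finite_acyclic_wf_converse)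
    obtain a where "a \<in> A" using False by auto
    then obtain k where k: "k \<in> A" "\<And>y. (y, k) \<in> (edges pa)\<inverse> \<Longrightarrow> y \<notin> A"
      using wf unfolding wf_eq_minimal by metis
    then have kc: "\<And>y. k \<in> pa y \<Longrightarrow> y \<notin> A" by (auto simp: edges_def)
    define A' where "A' = A - {k}"
    have cl: "\<And>j. j \<in> A' \<Longrightarrow> pa j \<subseteq> A'"
      using less.prems kc unfolding A'_def by blast
    have card: "card A' < card A" unfolding A'_def using k(1) by (intro card_Diff1_less) auto
    have IH: "distr lborel borel (TA A') = lborel" using less.hyps[OF card cl] .
    have cinv: "f k (z + t *\<^sub>R axis k 1) = f k z" for z t
      by (rule dep_inv[OF dep]) (use nopa' in \<open>auto simp: axis_def\<close>)
    have comp: "TA A = TA A' \<circ> (\<lambda>z. z - f k z *\<^sub>R axis k 1)"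
    proof (rule ext)
      fix z :: "real^'n"
      have fj: "f j (z - f k z *\<^sub>R axis k 1) = f j z" if "j \<in> A'" for j
      proof -
        have "k \<notin> pa j" using that kc unfolding A'_def by blast
        then have "f j (z + (- (f k z *\<^sub>R axis k 1))) = f j z"
          by (intro dep_inv[OF dep]) (auto simp: axis_def)
        then show ?thesis by simp
      qed
      show "TA A z = (TA A' \<circ> (\<lambda>z. z - f k z *\<^sub>R axis k 1)) z"
        using k(1) fj by (auto simp: TA_def vec_eq_iff axis_def A'_def)
    qed
    have "distr lborel borel (TA A) = distr (distr lborel borel (\<lambda>z. z - f k z *\<^sub>R axis k 1)) borel (TA A')"
      unfolding comp by (subst distr_distr) auto
    also have "\<dots> = distr lborel borel (TA A')"
      by (subst shear_preserve) (auto simp: cinv)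
    finally show ?thesis using IH by simp
  qed
qed

definition TT :: "real^'n \<Rightarrow> real^'n" where
  "TT z = (\<chi> j. z$j - f j z)"

lemma TT_TA: "TT = TA UNIV"
  by (auto simp: TT_def TA_def)

lemma TT_pres: "distr lborel borel TT = lborel"
  unfolding TT_TA by (rule TA_pres) auto

lemma TT_meas[measurable]: "TT \<in> borel_measurable borel"
  unfolding TT_TA by simp

lemma TT_inj: "inj TT"
proof (rule injI)
  fix z z' :: "real^'n" assume eq: "TT z = TT z'"
  have "finite (edges pa)" by simp
  then have wf: "wf (edges pa)"
    using dag unfolding is_dag_def by (rule finite_acyclic_wf)
  have "z $ k = z' $ k" for k
  proof (induct k rule: wf_induct[OF wf])
    case (1 k)
    then have "\<And>j. j \<in> pa k \<Longrightarrow> z $ j = z' $ j" by (auto simp: edges_def)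
    then have "f k z = f k z'" using dep[of k] unfolding depends_only_on_def by blast
    moreover have "z$k - f k z = z'$k - f k z'" using eq by (auto simp: TT_def vec_eq_iff)
    ultimately show ?case by simp
  qed
  then show "z = z'" by (simp add: vec_eq_iff)
qed

lemma TT_cont: "continuous_on UNIV TT"
  unfolding TT_def
  by (intro continuous_on_vec_lambda continuous_intros fcont[THEN continuous_on_subset]) auto

end




lemma joint_E:
  fixes M :: "'a measure" and E :: "'n::finite \<Rightarrow> 'a \<Rightarrow> real" and \<phi> :: "'n \<Rightarrow> real \<Rightarrow> ennreal"
  assumes P: "prob_space M" and ind: "prob_space.indep_vars M (\<lambda>_. borel) E UNIV"
    and dist: "\<And>k. distributed M lborel (E k) (\<phi> k)"
    and A[measurable]: "A \<in> sets borel"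
  shows "emeasure M {\<omega>\<in>space M. (\<chi> k. E k \<omega>) \<in> A} = (\<integral>\<^sup>+z. (\<Prod>k\<in>UNIV. \<phi> k (z$k)) * indicator A z \<partial>lborel)"
proof -
  interpret prob_space M by (rule P)
  interpret psf: product_sigma_finite "\<lambda>_::'n. lborel::real measure" by (rule psf)
  have rv[measurable]: "E k \<in> borel_measurable M" for k
    using distributed_measurable[OF dist[of k]] by simp
  have phim[measurable]: "\<phi> k \<in> borel_measurable borel" for k
    using distributed_borel_measurable[OF dist[of k]] by simp
  have ind': "indep_vars (\<lambda>_. lborel) E UNIV"
    using ind unfolding indep_vars_def by simp
  have D: "distr M (PiM UNIV (\<lambda>_. lborel)) (\<lambda>x. \<lambda>i\<in>UNIV. E i x) = PiM UNIV (\<lambda>i. distr M lborel (E i))"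
    using ind' by (subst (asm) indep_vars_iff_distr_eq_PiM) auto
  have Di: "distr M lborel (E i) = density lborel (\<phi> i)" for i
    by (rule distributed_distr_eq_density[OF dist])
  have psfd: "product_sigma_finite (\<lambda>i. density lborel (\<phi> i))"
    unfolding product_sigma_finite_def
  proof
    fix i
    have "prob_space (distr M lborel (E i))" by (rule prob_space_distr) simp
    then show "sigma_finite_measure (density lborel (\<phi> i))"
      unfolding Di by (rule prob_space_imp_sigma_finite)
  qed
  have PD: "density (PiM UNIV (\<lambda>_. lborel)) (\<lambda>x. \<Prod>i\<in>UNIV. \<phi> i (x i)) = PiM UNIV (\<lambda>i. density lborel (\<phi> i))"
  proof (rule product_sigma_finite.PiM_eqI[OF psfd])
    show "sets (density (PiM UNIV (\<lambda>_. lborel)) (\<lambda>x. \<Prod>i\<in>UNIV. \<phi> i (x i))) = sets (PiM UNIV (\<lambda>i. density lborel (\<phi> i)))"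
      by (auto intro!: sets_PiM_cong)
  next
    fix B assume B: "\<And>i. i \<in> (UNIV::'n set) \<Longrightarrow> B i \<in> sets (density lborel (\<phi> i))"
    then have [measurable]: "B i \<in> sets borel" for i by simp
    have "emeasure (density (PiM UNIV (\<lambda>_. lborel)) (\<lambda>x. \<Prod>i\<in>UNIV. \<phi> i (x i))) (PiE UNIV B) =
        (\<integral>\<^sup>+x. (\<Prod>i\<in>UNIV. \<phi> i (x i)) * indicator (PiE UNIV B) x \<partial>PiM UNIV (\<lambda>_. lborel))"
      by (subst emeasure_density) (auto intro!: sets_PiM_I_finite)
    also have "\<dots> = (\<integral>\<^sup>+x. (\<Prod>i\<in>UNIV. \<phi> i (x i) * indicator (B i) (x i)) \<partial>PiM UNIV (\<lambda>_. lborel))"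
      by (intro nn_integral_cong) (auto simp: prod.distrib indicator_def PiE_def space_PiM prod_zero_iff Pi_iff)
    also have "\<dots> = (\<Prod>i\<in>UNIV. \<integral>\<^sup>+y. \<phi> i y * indicator (B i) y \<partial>lborel)"
      by (rule psf.product_nn_integral_prod) auto
    also have "\<dots> = (\<Prod>i\<in>UNIV. emeasure (density lborel (\<phi> i)) (B i))"
      by (intro prod.cong refl) (simp add: emeasure_density)
    finally show "emeasure (density (PiM UNIV (\<lambda>_. lborel)) (\<lambda>x. \<Prod>i\<in>UNIV. \<phi> i (x i))) (PiE UNIV B) =
        (\<Prod>i\<in>UNIV. emeasure (density lborel (\<phi> i)) (B i))" .
  qed simp
  have Ef[measurable]: "(\<lambda>x. \<lambda>i\<in>UNIV. E i x) \<in> measurable M (PiM UNIV (\<lambda>_. lborel))"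
    by measurable
  have VA[measurable]: "vec_lambda -` A \<inter> space (PiM UNIV (\<lambda>_. lborel)) \<in> sets (PiM UNIV (\<lambda>_::'n. lborel))"
    by (rule measurable_sets[OF vl_meas A])
  have "{\<omega>\<in>space M. (\<chi> k. E k \<omega>) \<in> A} = (\<lambda>x. \<lambda>i\<in>UNIV. E i x) -` (vec_lambda -` A \<inter> space (PiM UNIV (\<lambda>_. lborel))) \<inter> space M"
    by (auto simp: space_PiM restrict_def)
  then have "emeasure M {\<omega>\<in>space M. (\<chi> k. E k \<omega>) \<in> A} =
      emeasure (distr M (PiM UNIV (\<lambda>_. lborel)) (\<lambda>x. \<lambda>i\<in>UNIV. E i x)) (vec_lambda -` A \<inter> space (PiM UNIV (\<lambda>_. lborel)))"
    by (subst emeasure_distr) auto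
  also have "\<dots> = emeasure (density (PiM UNIV (\<lambda>_. lborel)) (\<lambda>x. \<Prod>i\<in>UNIV. \<phi> i (x i))) (vec_lambda -` A \<inter> space (PiM UNIV (\<lambda>_. lborel)))"
    unfolding D Di PD ..
  also have "\<dots> = (\<integral>\<^sup>+x. (\<Prod>i\<in>UNIV. \<phi> i (x i)) * indicator (vec_lambda -` A \<inter> space (PiM UNIV (\<lambda>_. lborel))) x \<partial>PiM UNIV (\<lambda>_. lborel))"
    by (subst emeasure_density) auto
  also have "\<dots> = (\<integral>\<^sup>+x. (\<Prod>k\<in>UNIV. \<phi> k (vec_lambda x $ k)) * indicator A (vec_lambda x) \<partial>PiM UNIV (\<lambda>_. lborel))"
    by (intro nn_integral_cong) (auto simp: indicator_def)
  also have "\<dots> = (\<integral>\<^sup>+z. (\<Prod>k\<in>UNIV. \<phi> k (z$k)) * indicator A z \<partial>lborel)"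
    by (rule nn_lborel_vec[symmetric]) measurable
  finally show ?thesis .
qed



lemma nn_cont_cbox:
  fixes g :: "real^'n::finite \<Rightarrow> real"
  assumes "continuous_on UNIV g" "\<And>z. 0 \<le> g z"
  shows "(\<integral>\<^sup>+z. ennreal (g z) * indicator (cbox a b) z \<partial>lborel) = ennreal (integral (cbox a b) g)"
proof -
  have "g integrable_on cbox a b"
    by (rule integrable_continuous) (rule continuous_on_subset[OF assms(1)], simp)
  then have "(g has_integral integral (cbox a b) g) (cbox a b)" by (simp add: has_integral_integral)
  then have "(\<integral>\<^sup>+z. ennreal (indicator (cbox a b) z * g z) \<partial>lborel) = ennreal (integral (cbox a b) g)"
    by (rule nn_integral_has_integral_lebesgue[rotated]) (simp add: assms(2))
  moreover have "(\<lambda>z. ennreal (indicator (cbox a b) z * g z)) = (\<lambda>z. ennreal (g z) * indicator (cbox a b) z)"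
    by (auto simp: indicator_def)
  ultimately show ?thesis by simp
qed

lemma cont_int0_le:
  fixes s :: "real^'n::finite \<Rightarrow> real"
  assumes cs: "continuous_on UNIV s" and i0: "\<And>a b. (s has_integral 0) (cbox a b)"
  shows "s z \<le> 0"
proof (rule ccontr)
  assume "\<not> s z \<le> 0"
  then have "z \<in> {y. 0 < s y}" by simp
  moreover have "open {y. (\<lambda>_. 0) y < s y}"
    by (rule open_Collect_less) (auto intro: cs)
  ultimately have "open {y. 0 < s y}" "z \<in> {y. 0 < s y}" by auto
  then obtain a b where ab: "cbox a b \<subseteq> {y. 0 < s y}" "z \<in> box a b"
    by (rule open_contains_cbox)
  have "s z = 0"
  proof (rule has_integral_0_cbox_imp_0[of a b s])
    show "continuous_on (cbox a b) s" by (rule continuous_on_subset[OF cs]) simp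
    show "\<And>x. x \<in> box a b \<Longrightarrow> 0 \<le> s x" using ab box_subset_cbox by (metis less_imp_le mem_Collect_eq subsetD)
    show "(s has_integral 0) (cbox a b)" by (rule i0)
    show "box a b \<noteq> {}" using ab by auto
    show "z \<in> cbox a b" using ab box_subset_cbox by blast
  qed
  then show False using \<open>\<not> s z \<le> 0\<close> by simp
qed

lemma cont_dens_eq:
  fixes p q :: "real^'n::finite \<Rightarrow> real"
  assumes cp: "continuous_on UNIV p" and cq: "continuous_on UNIV q" and qpos: "\<And>z. 0 < q z"
    and eq: "\<And>a b. (\<integral>\<^sup>+z. ennreal (p z) * indicator (cbox a b) z \<partial>lborel) = (\<integral>\<^sup>+z. ennreal (q z) * indicator (cbox a b) z \<partial>lborel)"
  shows "p z = q z"
proof -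
  define g where "g z = max (p z) 0" for z
  have cg: "continuous_on UNIV g" unfolding g_def by (intro continuous_intros cp)
  have ig: "integral (cbox a b) g = integral (cbox a b) q" for a b
  proof -
    have "(\<integral>\<^sup>+z. ennreal (p z) * indicator (cbox a b) z \<partial>lborel) = (\<integral>\<^sup>+z. ennreal (g z) * indicator (cbox a b) z \<partial>lborel)"
      by (simp add: g_def ennreal_max_0')
    moreover have "(\<integral>\<^sup>+z. ennreal (g z) * indicator (cbox a b) z \<partial>lborel) = ennreal (integral (cbox a b) g)"
      by (rule nn_cont_cbox[OF cg]) (simp add: g_def)
    moreover have "(\<integral>\<^sup>+z. ennreal (q z) * indicator (cbox a b) z \<partial>lborel) = ennreal (integral (cbox a b) q)"
      by (rule nn_cont_cbox[OF cq]) (simp add: less_imp_le qpos)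
    ultimately have "ennreal (integral (cbox a b) g) = ennreal (integral (cbox a b) q)"
      using eq[of a b] by simp
    moreover have "0 \<le> integral (cbox a b) g"
    proof (rule integral_nonneg)
      show "g integrable_on cbox a b" by (rule integrable_continuous, rule continuous_on_subset[OF cg]) simp
    qed (simp add: g_def)
    moreover have "0 \<le> integral (cbox a b) q"
    proof (rule integral_nonneg)
      show "q integrable_on cbox a b" by (rule integrable_continuous, rule continuous_on_subset[OF cq]) simp
    qed (simp add: less_imp_le qpos)
    ultimately show ?thesis by simp
  qed
  have hi: "((\<lambda>z. g z - q z) has_integral 0) (cbox a b)" for a b
  proof -
    have "(g has_integral integral (cbox a b) g) (cbox a b)"
      by (rule integrable_integral, rule integrable_continuous, rule continuous_on_subset[OF cg]) simp
    moreover have "(q has_integral integral (cbox a b) q) (cbox a b)"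
      by (rule integrable_integral, rule integrable_continuous, rule continuous_on_subset[OF cq]) simp
    ultimately have "((\<lambda>z. g z - q z) has_integral integral (cbox a b) g - integral (cbox a b) q) (cbox a b)"
      by (rule has_integral_diff)
    then show ?thesis using ig by simp
  qed
  have c1: "continuous_on UNIV (\<lambda>z. g z - q z)" by (intro continuous_intros cg cq)
  have c2: "continuous_on UNIV (\<lambda>z. - (g z - q z))" by (intro continuous_intros cg cq)
  have "g z - q z \<le> 0" by (rule cont_int0_le[OF c1 hi])
  moreover have "- (g z - q z) \<le> 0"
    by (rule cont_int0_le[OF c2]) (use has_integral_neg[OF hi] in simp)
  ultimately have "g z = q z" by simp
  then show ?thesis using qpos[of z] unfolding g_def by (auto simp: max_def split: if_splits)
qed




theorem lemma2:
  fixes M :: "'a measure"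
    and pa :: "'n::finite \<Rightarrow> 'n set"
    and f :: "'n \<Rightarrow> real^'n \<Rightarrow> real"
    and \<sigma> :: "'n \<Rightarrow> real"
    and E :: "'n \<Rightarrow> 'a \<Rightarrow> real"
    and Z :: "'a \<Rightarrow> real^'n"
    and p :: "real^'n \<Rightarrow> real"
    and \<beta> :: "real^'n^'n"
    and i :: 'n
  assumes "prob_space M"
    and "is_dag pa"
    and "\<And>k. depends_only_on (f k) (pa k)"
    and "\<And>k. C2 (f k)"
    and "\<And>k. dir_nonlinear (f k) (pa k)"
    and "\<And>k. \<sigma> k > 0"
    and "prob_space.indep_vars M (\<lambda>_. borel) E UNIV"
    and "\<And>k. distributed M lborel (E k) (normal_density 0 (\<sigma> k))"
    and "Z \<in> borel_measurable M"
    and "\<And>\<omega> k. \<omega> \<in> space M \<Longrightarrow> Z \<omega> $ k = f k (Z \<omega>) + E k \<omega>"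
    and "distributed M lborel Z (\<lambda>z. ennreal (p z))"
    and "continuous_on UNIV p"
  shows "zero_variance M
           (\<lambda>\<omega>. (transpose \<beta> ** hessian (\<lambda>z. ln (p z)) (Z \<omega>) ** \<beta>) $ i $ i)
         \<longleftrightarrow> (\<forall>j. \<not> leaf pa j \<longrightarrow> \<beta> $ j $ i = 0)"
proof -
  interpret P: prob_space M by (rule assms(1))
  have nopa: "\<And>k. k \<notin> pa k" using dag_nopa[OF assms(2)] .
  have fd: "\<And>k y. f k differentiable (at y)" using assms(4) unfolding C2_def by blast
  have fdd: "\<And>k v y. (\<lambda>y. dir_deriv (f k) v y) differentiable (at y)" using assms(4) unfolding C2_def by blast
  have fdd2: "\<And>k v w. continuous_on UNIV (dir_deriv2 (f k) v w)" using assms(4) unfolding C2_def by blast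
  have fcont: "\<And>k. continuous_on UNIV (f k)"
    using fd by (intro differentiable_imp_continuous_on) (simp add: differentiable_on_def)
  have sig: "\<And>k. \<sigma> k \<noteq> 0" using assms(6) by (metis less_irrefl)
  define q where "q z = (\<Prod>k\<in>UNIV. normal_density 0 (\<sigma> k) (z$k - f k z))" for z
  have qpos: "\<And>z. 0 < q z" unfolding q_def by (intro prod_pos normal_density_pos assms(6))
  have qcont: "continuous_on UNIV q"
    unfolding q_def normal_density_def
    by (intro continuous_intros fcont[THEN continuous_on_subset]) (auto simp: sig)
  note TTd = TT_def[OF assms(3) fcont assms(2)]
  have ev: "\<And>\<omega>. \<omega> \<in> space M \<Longrightarrow> (\<chi> k. E k \<omega>) = TT f (Z \<omega>)"
    using assms(10) by (auto simp: TTd vec_eq_iff algebra_simps)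
  have inj: "inj (TT f)" by (rule TT_inj[OF assms(3) fcont assms(2)])
  have TTc: "continuous_on UNIV (TT f)" by (rule TT_cont[OF assms(3) fcont assms(2)])
  have TTm[measurable]: "TT f \<in> borel_measurable borel" by (rule TT_meas[OF assms(3) fcont assms(2)])
  have box: "(\<integral>\<^sup>+z. ennreal (p z) * indicator (cbox a b) z \<partial>lborel) = (\<integral>\<^sup>+z. ennreal (q z) * indicator (cbox a b) z \<partial>lborel)" for a b
  proof -
    let ?C = "cbox a b"
    have "compact (TT f ` ?C)"
      by (rule compact_continuous_image[OF continuous_on_subset[OF TTc]]) auto
    then have Cb[measurable]: "TT f ` ?C \<in> sets borel" by (intro borel_closed compact_imp_closed)
    have "(\<integral>\<^sup>+z. ennreal (p z) * indicator ?C z \<partial>lborel) = emeasure M (Z -` ?C \<inter> space M)"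
      using distributed_emeasure[OF assms(11), of ?C] by simp
    also have "Z -` ?C \<inter> space M = {\<omega> \<in> space M. (\<chi> k. E k \<omega>) \<in> TT f ` ?C}"
      using ev inj by (auto simp: inj_image_mem_iff dest: injD)
    also have "emeasure M \<dots> = (\<integral>\<^sup>+e. (\<Prod>k\<in>UNIV. ennreal (normal_density 0 (\<sigma> k) (e$k))) * indicator (TT f ` ?C) e \<partial>lborel)"
      by (rule joint_E[OF assms(1) assms(7) assms(8) Cb])
    also have "\<dots> = (\<integral>\<^sup>+e. (\<Prod>k\<in>UNIV. ennreal (normal_density 0 (\<sigma> k) (e$k))) * indicator (TT f ` ?C) e \<partial>distr lborel borel (TT f))"
      by (simp add: TT_pres[OF assms(3) fcont assms(2)])
    also have "\<dots> = (\<integral>\<^sup>+z. (\<Prod>k\<in>UNIV. ennreal (normal_density 0 (\<sigma> k) (TT f z $ k))) * indicator (TT f ` ?C) (TT f z) \<partial>lborel)"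
      by (rule nn_integral_distr) auto
    also have "\<dots> = (\<integral>\<^sup>+z. ennreal (q z) * indicator ?C z \<partial>lborel)"
    proof (intro nn_integral_cong)
      fix z
      have ind: "indicator (TT f ` ?C) (TT f z) = (indicator ?C z :: ennreal)"
        by (simp add: indicator_def inj_image_mem_iff[OF inj])
      show "(\<Prod>k\<in>UNIV. ennreal (normal_density 0 (\<sigma> k) (TT f z $ k))) * indicator (TT f ` ?C) (TT f z) = ennreal (q z) * indicator ?C z"
        unfolding ind by (simp add: q_def TTd prod_ennreal normal_density_nonneg)
    qed
    finally show ?thesis .
  qed
  have pq: "\<And>z. p z = q z" by (rule cont_dens_eq[OF assms(12) qcont qpos box])
  define Cc where "Cc k = ln (1 / sqrt (2 * pi * (\<sigma> k)\<^sup>2))" for k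
  have lnp: "(\<lambda>z. ln (p z)) = LL f \<sigma> Cc"
  proof
    fix z
    have "ln (p z) = (\<Sum>k\<in>UNIV. ln (normal_density 0 (\<sigma> k) (z$k - f k z)))"
      unfolding pq q_def by (rule ln_prod) (simp, metis normal_density_pos[OF assms(6)] less_irrefl)
    also have "\<dots> = (\<Sum>k\<in>UNIV. Cc k - (z$k - f k z)\<^sup>2 / (2 * (\<sigma> k)\<^sup>2))"
    proof (intro sum.cong refl)
      fix k :: 'n
      have sp: "0 < 1 / sqrt (2 * pi * (\<sigma> k)\<^sup>2)" using sig[of k] by simp
      show "ln (normal_density 0 (\<sigma> k) (z$k - f k z)) = Cc k - (z$k - f k z)\<^sup>2 / (2 * (\<sigma> k)\<^sup>2)"
        unfolding normal_density_def Cc_def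
        by (subst ln_mult) (use sp in simp)
    qed
    also have "\<dots> = LL f \<sigma> Cc z" by (rule LL_def[OF fd fdd sig, symmetric])
    finally show "ln (p z) = LL f \<sigma> Cc z" .
  qed
  define b where "b = (\<chi> j. \<beta> $ j $ i)"
  define h where "h z = dir_deriv2 (LL f \<sigma> Cc) b b z" for z
  have Xh: "(transpose \<beta> ** hessian (\<lambda>z. ln (p z)) z ** \<beta>) $ i $ i = h z" for z
    unfolding lnp hess_entry h_def
    using quad_form[OF LL_diff[OF fd fdd sig] LL_dd_diff[OF fd fdd sig], where z=z and b=b] by (simp add: b_def)
  have hform: "h z = - (\<Sum>m\<in>UNIV. tau f \<sigma> b m z)" for z
    unfolding h_def by (rule h_formula[OF assms(3) assms(4) nopa sig])
  have hcont: "continuous_on UNIV h"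
  proof -
    have dc: "continuous_on UNIV (\<lambda>y. dir_deriv (f m) b y)" for m
      using fdd by (intro differentiable_imp_continuous_on) (simp add: differentiable_on_def)
    have "continuous_on UNIV (\<lambda>z. - (\<Sum>m\<in>UNIV. tau f \<sigma> b m z))"
      unfolding tau_def[OF assms(3) assms(4) nopa sig]
      by (intro continuous_intros dc fdd2 fcont[THEN continuous_on_subset]) (auto simp: sig)
    then show ?thesis using hform by (simp add: fun_eq_iff[symmetric])
  qed
  have hm[measurable]: "h \<in> borel_measurable borel" by (rule borel_measurable_continuous_onI[OF hcont])
  have Xeq: "(\<lambda>\<omega>. (transpose \<beta> ** hessian (\<lambda>z. ln (p z)) (Z \<omega>) ** \<beta>) $ i $ i) = (\<lambda>\<omega>. h (Z \<omega>))"
    using Xh by auto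
  have Zm[measurable]: "Z \<in> borel_measurable M" by (rule assms(9))
  show ?thesis unfolding Xeq
  proof
    assume zv: "zero_variance M (\<lambda>\<omega>. h (Z \<omega>))"
    then have int2: "integrable M (\<lambda>\<omega>. (h (Z \<omega>))\<^sup>2)" and var: "P.variance (\<lambda>\<omega>. h (Z \<omega>)) = 0"
      unfolding zero_variance_def by auto
    have int1: "integrable M (\<lambda>\<omega>. h (Z \<omega>))"
      by (rule P.square_integrable_imp_integrable[OF _ int2]) measurable
    define c where "c = P.expectation (\<lambda>\<omega>. h (Z \<omega>))"
    have "(\<lambda>\<omega>. (h (Z \<omega>) - c)\<^sup>2) = (\<lambda>\<omega>. (h (Z \<omega>))\<^sup>2 - 2 * c * h (Z \<omega>) + c\<^sup>2)"
      by (auto simp: power2_diff mult_ac)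
    moreover have "integrable M (\<lambda>\<omega>. (h (Z \<omega>))\<^sup>2 - 2 * c * h (Z \<omega>) + c\<^sup>2)"
      by (intro Bochner_Integration.integrable_add Bochner_Integration.integrable_diff int2
          integrable_mult_right int1 finite_measure.integrable_const) unfold_locales
    ultimately have intd: "integrable M (\<lambda>\<omega>. (h (Z \<omega>) - c)\<^sup>2)" by simp
    have "AE \<omega> in M. (h (Z \<omega>) - c)\<^sup>2 = 0"
      using integral_nonneg_eq_0_iff_AE[OF intd] var unfolding c_def by simp
    then have AEM: "AE \<omega> in M. h (Z \<omega>) = c" by simp
    define U where "U = - {z. h z = c}"
    have "closed {z. h z = c}" by (rule closed_Collect_eq[OF hcont continuous_on_const])
    then have Ub[measurable]: "U \<in> sets borel" unfolding U_def by (intro borel_open) auto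
    have "emeasure M (Z -` U \<inter> space M) = 0"
    proof -
      have S: "Z -` U \<inter> space M \<in> sets M" by measurable
      have eqs: "{\<omega>\<in>space M. \<not> h (Z \<omega>) = c} = Z -` U \<inter> space M" by (auto simp: U_def)
      show ?thesis using AE_iff_measurable[where P="\<lambda>\<omega>. h (Z \<omega>) = c", OF S eqs] AEM by simp
    qed
    moreover have "emeasure M (Z -` U \<inter> space M) = (\<integral>\<^sup>+z. ennreal (q z) * indicator U z \<partial>lborel)"
      using distributed_emeasure[OF assms(11), of U] by (simp add: pq)
    ultimately have "(\<integral>\<^sup>+z. ennreal (q z) * indicator U z \<partial>lborel) = 0" by simp
    moreover have [measurable]: "q \<in> borel_measurable borel" by (rule borel_measurable_continuous_onI[OF qcont])
    ultimately have "AE z in lborel. ennreal (q z) * indicator U z = 0"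
      by (subst (asm) nn_integral_0_iff_AE) auto
    then have "AE z in lborel. z \<in> {z. h z = c}"
    proof eventually_elim
      case (elim z)
      have "ennreal (q z) \<noteq> 0" using qpos[of z] by (simp add: ennreal_eq_0_iff not_le)
      then show ?case using elim by (auto simp: U_def indicator_def split: if_splits)
    qed
    then have "AE z in lebesgue. z \<in> {z. h z = c}" by (rule AE_completion)
    then have hc: "\<And>z. h z = c" using mem_closed_if_AE_lebesgue[OF \<open>closed {z. h z = c}\<close>] by blast
    show "\<forall>j. \<not> leaf pa j \<longrightarrow> \<beta> $ j $ i = 0"
    proof (rule ccontr)
      assume "\<not> (\<forall>j. \<not> leaf pa j \<longrightarrow> \<beta> $ j $ i = 0)"
      then obtain j where j: "\<not> leaf pa j" "b $ j \<noteq> 0" by (auto simp: b_def)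
      obtain k j0 where k: "j0 \<in> pa k" "b $ j0 \<noteq> 0" "\<forall>m j. k \<in> pa m \<longrightarrow> j \<in> pa m \<longrightarrow> b $ j = 0"
        using dag_select[OF assms(2) j] by blast
      show False
        using core_onlyif[where C=Cc and b=b and c=c and k=k and f=f and pa=pa and \<sigma>=\<sigma>, OF assms(3) assms(4) nopa sig] hc k assms(5)[of k]
        unfolding h_def by blast
    qed
  next
    assume R: "\<forall>j. \<not> leaf pa j \<longrightarrow> \<beta> $ j $ i = 0"
    then have "\<And>m j. j \<in> pa m \<Longrightarrow> b $ j = 0" using leaf_parent[of _ pa] by (auto simp: b_def)
    then have hc: "h z = - (\<Sum>m\<in>UNIV. (b $ m)\<^sup>2 / (\<sigma> m)\<^sup>2)" for z
      unfolding h_def by (rule core_if[OF assms(3) assms(4) nopa sig])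
    show "zero_variance M (\<lambda>\<omega>. h (Z \<omega>))"
      unfolding zero_variance_def hc
      by (auto intro!: finite_measure.integrable_const simp: P.prob_space) unfold_locales
  qed
qed


end
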